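(* Let $m\in[\frac n3,\frac n2-1]$ be an integer and $\delta\in(0,2)$. Let $x$ be a random bit string in $\{0,1\}^n$ such that $\mathrm{DLB}(x)=2m+1$ and such that the bits $x_i$, $i\in[2m+3..n]$, are mutually independent, independent of the other bits, and uniformly distributed in $\{0,1\}$. Let $y$ be generated from $x$ by a unary unbiased variation operator $V$, and let $Y=(\mathrm{HLB}_\delta(y)-\mathrm{HLB}_\delta(x))\mathbb{1}_{\mathrm{DLB}(y)\ge\mathrm{DLB}(x)}$. Then $E[Y]\le\frac{16}{n^2}$.
   Context: Let $n$ be an even positive integer. For $x\in\{0,1\}^n$ consider the blocks $(x_{2\ell+1},x_{2\ell+2})$, $\ell=0,\dots,\frac n2-1$. If $x\neq(1,\dots,1)$, let $m$ be the smallest $\ell$ with $x_{2\ell+1}\neq 1$ or $x_{2\ell+2}\neq 1$, and define $\mathrm{DLB}(x)=2m+1$ if $x_{2m+1}+x_{2m+2}=0$ and $\mathrm{DLB}(x)=2m$ if $x_{2m+1}+x_{2m+2}=1$; set $\mathrm{DLB}(1,\dots,1)=n$. For $\delta\in(0,2)$, $\mathrm{HLB}_\delta(x)=2m$ if $\mathrm{DLB}(x)=2m+1$, $\mathrm{HLB}_\delta(x)=2m+2-\delta$ if $\mathrm{DLB}(x)=2m$ (for $m\in\{0,\dots,\frac n2-1\}$), and $\mathrm{HLB}_\delta(x)=n$ if $\mathrm{DLB}(x)=n$. A unary unbiased variation operator $V$ assigns to each $x\in\{0,1\}^n$ a probability distribution $V(x)$ on $\{0,1\}^n$ such that for all $x,y,z$,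 $\Pr[y=V(x)]=\Pr[y\oplus z=V(x\oplus z)]$, and for all permutations $\sigma$ of $[1..n]$, $\Pr[y=V(x)]=\Pr[\sigma(y)=V(\sigma(x))]$, where $\sigma(x)=(x_{\sigma(1)},\dots,x_{\sigma(n)})$. *)

theory Defs
  imports "HOL-Probability.Probability_Mass_Function" "HOL-Combinatorics.Permutations"
begin

(* Bit strings of length n are bool lists; the paper's 1-based bit x_i is  x ! (i - 1).
   Block l (0-based) consists of x_{2l+1} = x ! (2*l) and x_{2l+2} = x ! (2*l+1). *)

definition DLB :: "nat \<Rightarrow> bool list \<Rightarrow> nat" where
  "DLB n x =
     (if (\<forall>i<n. x ! i) then n
      else (let m = (LEAST l. l < n div 2 \<and> \<not> (x ! (2*l) \<and> x ! (2*l+1)))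
            in if \<not> x ! (2*m) \<and> \<not> x ! (2*m+1) then 2*m+1 else 2*m))"

definition HLB :: "real \<Rightarrow> nat \<Rightarrow> bool list \<Rightarrow> real" where
  "HLB \<delta> n x =
     (let d = DLB n x in
      if d = n then real n
      else if odd d then real (d - 1)
      else real d + 2 - \<delta>)"

definition xor_bits :: "bool list \<Rightarrow> bool list \<Rightarrow> bool list" where
  "xor_bits x z = map2 (\<noteq>) x z"

definition unary_unbiased :: "nat \<Rightarrow> (bool list \<Rightarrow> bool list pmf) \<Rightarrow> bool" where
  "unary_unbiased n V \<longleftrightarrow>
     (\<forall>x. length x = n \<longrightarrow> set_pmf (V x) \<subseteq> {y. length y = n}) \<and>
     (\<forall>x y z. length x = n \<and> length y = n \<and> length z = n \<longrightarrow>
        pmf (V x) y = pmf (V (xor_bits x z)) (xor_bits y z)) \<and>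
     (\<forall>\<sigma> x y. \<sigma> permutes {..<n} \<and> length x = n \<and> length y = n \<longrightarrow>
        pmf (V x) y = pmf (V (permute_list \<sigma> x)) (permute_list \<sigma> y))"

end

theory Submission
  imports Defs
begin


lemma DLB_cases:
  assumes "length y = n" "even n" "\<not>(\<forall>i<n. y!i)"
  obtains l where "l < n div 2" "\<forall>l'<l. y!(2*l') \<and> y!(2*l'+1)" "\<not>(y!(2*l) \<and> y!(2*l+1))"
    "DLB n y = (if \<not>y!(2*l) \<and> \<not>y!(2*l+1) then 2*l+1 else 2*l)"
proof -
  obtain i where i: "i < n" "\<not> y!i" using assms(3) by blast
  define P where "P = (\<lambda>l. l < n div 2 \<and> \<not> (y ! (2*l) \<and> y ! (2*l+1)))"
  have Pi: "P (i div 2)" unfolding P_def using i assms(2)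
    by (metis dvd_mult_div_cancel even_succ_div_two less_mult_imp_div_less odd_two_times_div_two_succ mult.commute div_mult_self1_is_m zero_less_numeral)
  define l where "l = (LEAST l. P l)"
  have Pl: "P l" unfolding l_def by (rule LeastI[of P, OF Pi])
  have lt: "\<forall>l'<l. y!(2*l') \<and> y!(2*l'+1)"
  proof (intro allI impI)
    fix l' assume "l' < l"
    then have "\<not> P l'" unfolding l_def by (rule not_less_Least)
    moreover have "l' < n div 2" using Pl \<open>l' < l\<close> unfolding P_def by simp
    ultimately show "y!(2*l') \<and> y!(2*l'+1)" unfolding P_def by simp
  qed
  have "DLB n y = (if \<not>y!(2*l) \<and> \<not>y!(2*l+1) then 2*l+1 else 2*l)"
    by (simp only: DLB_def if_not_P[OF assms(3)] Let_def l_def P_def)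
  then show ?thesis using that Pl lt unfolding P_def by blast
qed

lemma DLB_all: "(\<forall>i<n. y!i) \<Longrightarrow> DLB n y = n"
  by (simp add: DLB_def)

lemma DLB_block:
  assumes "length y = n" "even n" "j < n div 2" "\<forall>l<j. y!(2*l) \<and> y!(2*l+1)"
    "\<not>(y!(2*j) \<and> y!(2*j+1))"
  shows "DLB n y = (if \<not>y!(2*j) \<and> \<not>y!(2*j+1) then 2*j+1 else 2*j)"
proof -
  have "2*j+1 < n" using assms(2,3) by auto
  then have "\<not>(\<forall>i<n. y!i)" using assms(5) by (metis add_lessD1)
  then obtain l where l: "l < n div 2" "\<forall>l'<l. y!(2*l') \<and> y!(2*l'+1)" "\<not>(y!(2*l) \<and> y!(2*l+1))"
    "DLB n y = (if \<not>y!(2*l) \<and> \<not>y!(2*l+1) then 2*l+1 else 2*l)"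
    using DLB_cases[OF assms(1,2)] by blast
  have "l = j"
  proof (rule ccontr)
    assume "l \<noteq> j"
    then have "l < j \<or> j < l" by auto
    then show False using l(2,3) assms(4,5) by blast
  qed
  then show ?thesis using l(4) by simp
qed

lemma DLB_false_le:
  assumes "length y = n" "even n" "i < n" "\<not> y!i"
  shows "DLB n y \<le> 2*(i div 2)+1"
proof -
  have "\<not>(\<forall>i<n. y!i)" using assms by blast
  then obtain l where l: "l < n div 2" "\<forall>l'<l. y!(2*l') \<and> y!(2*l'+1)" "\<not>(y!(2*l) \<and> y!(2*l+1))"
    "DLB n y = (if \<not>y!(2*l) \<and> \<not>y!(2*l+1) then 2*l+1 else 2*l)"
    using DLB_cases[OF assms(1,2)] by blast
  have "l \<le> i div 2"
  proof (rule ccontr)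
    assume "\<not> l \<le> i div 2"
    then have "y!(2*(i div 2)) \<and> y!(2*(i div 2)+1)" using l(2) by auto
    moreover have "i = 2*(i div 2) \<or> i = 2*(i div 2)+1" by auto
    ultimately show False using assms(4) by metis
  qed
  then show ?thesis using l(4) by auto
qed

lemma DLB_true_ge:
  assumes "length y = n" "even n" "2*j \<le> n" "\<forall>i<2*j. y!i"
  shows "DLB n y \<ge> 2*j"
proof (cases "\<forall>i<n. y!i")
  case True then show ?thesis using assms by (simp add: DLB_all)
next
  case False
  then obtain l where l: "l < n div 2" "\<forall>l'<l. y!(2*l') \<and> y!(2*l'+1)" "\<not>(y!(2*l) \<and> y!(2*l+1))"
    "DLB n y = (if \<not>y!(2*l) \<and> \<not>y!(2*l+1) then 2*l+1 else 2*l)"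
    using DLB_cases[OF assms(1,2)] by blast
  have "j \<le> l"
  proof (rule ccontr)
    assume "\<not> j \<le> l"
    then have "2*l < 2*j" "2*l+1 < 2*j" by auto
    then show False using l(3) assms(4) by blast
  qed
  then show ?thesis using l(4) by auto
qed

lemma HLB_le:
  assumes "0 \<le> \<delta>" "even n"
  shows "HLB \<delta> n y \<le> 2 * real (DLB n y div 2) + 2"
proof -
  define d where "d = DLB n y"
  have "HLB \<delta> n y = (if d = n then real n else if odd d then real (d - 1) else real d + 2 - \<delta>)"
    by (simp add: HLB_def d_def Let_def)
  moreover have "real n \<le> 2 * real (n div 2) + 2" using assms(2) by auto
  moreover have "odd d \<Longrightarrow> real (d - 1) \<le> 2 * real (d div 2) + 2"
    by (elim oddE) simp
  moreover have "even d \<Longrightarrow> real d + 2 - \<delta> \<le> 2 * real (d div 2) + 2" using assms(1) by auto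
  moreover have "even d \<Longrightarrow> real d = 2 * real (d div 2)" by (elim evenE) simp
  ultimately show ?thesis unfolding d_def[symmetric] by (smt (verit))
qed

lemma HLB_odd: "DLB n y = 2*j+1 \<Longrightarrow> even n \<Longrightarrow> HLB \<delta> n y = 2*j"
  by (auto simp add: HLB_def Let_def)



lemma xor_length[simp]: "length (xor_bits a b) = min (length a) (length b)"
  by (simp add: xor_bits_def)

lemma xor_nth: "i < length a \<Longrightarrow> i < length b \<Longrightarrow> xor_bits a b ! i = (a!i \<noteq> b!i)"
  by (simp add: xor_bits_def)

lemma xor_inv: "length a = length b \<Longrightarrow> xor_bits (xor_bits a b) b = a"
  by (rule nth_equalityI) (auto simp: xor_nth)

lemma xor_self: "xor_bits a a = replicate (length a) False"
  by (rule nth_equalityI) (auto simp: xor_nth)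

lemma xor_append: "length a1 = length b1 \<Longrightarrow> xor_bits (a1@a2) (b1@b2) = xor_bits a1 b1 @ xor_bits a2 b2"
  by (simp add: xor_bits_def)

lemma lists_Suc_sum:
  fixes f :: "bool list \<Rightarrow> 'a::comm_monoid_add"
  shows "(\<Sum>t\<in>{t. length t = Suc q}. f t) = (\<Sum>t\<in>{t. length t = q}. f (True#t) + f (False#t))"
proof -
  have e: "{t. length t = Suc q} = (\<lambda>t. True#t) ` {t. length t = q} \<union> (\<lambda>t. False#t) ` {t. length t = q}"
  proof (rule set_eqI)
    fix t show "t \<in> {t. length t = Suc q} \<longleftrightarrow> t \<in> (\<lambda>t. True#t) ` {t. length t = q} \<union> (\<lambda>t. False#t) ` {t. length t = q}"
      by (cases t) auto
  qed
  have fin: "finite {t :: bool list. length t = q}" using finite_lists_length_eq[of "UNIV :: bool set"] by simp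
  have "(\<Sum>t\<in>{t. length t = Suc q}. f t) = sum f ((\<lambda>t. True#t) ` {t. length t = q}) + sum f ((\<lambda>t. False#t) ` {t. length t = q})"
    unfolding e by (rule sum.union_disjoint) (use fin in auto)
  also have "\<dots> = (\<Sum>t\<in>{t. length t = q}. f (True#t)) + (\<Sum>t\<in>{t. length t = q}. f (False#t))"
    by (simp add: sum.reindex inj_on_def)
  finally show ?thesis by (simp add: sum.distrib)
qed

definition wt :: "bool list \<Rightarrow> nat" where "wt z = length (filter id z)"

lemma wt_simps[simp]: "wt [] = 0" "wt (True#t) = Suc (wt t)" "wt (False#t) = wt t"
  "wt (a @ b) = wt a + wt b"
  by (auto simp: wt_def)

lemma card_filter_sum: "finite A \<Longrightarrow> card {x\<in>A. P x} = (\<Sum>x\<in>A. if P x then 1 else 0)"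
  using sum.inter_filter[of A "\<lambda>_. 1::nat" P] by simp

lemma fin_lists: "finite {t :: bool list. length t = q}"
  using finite_lists_length_eq[of "UNIV :: bool set"] by simp

lemma card_wt: "card {z. length z = N \<and> wt z = r} = N choose r"
proof (induction N arbitrary: r)
  case 0
  show ?case
  proof (cases "r = 0")
    case True
    then have "{z. length z = 0 \<and> wt z = r} = {[]}" by auto
    then show ?thesis using True by simp
  next
    case False
    then have "{z. length z = 0 \<and> wt z = r} = {}" by auto
    then have c0: "card {z. length z = 0 \<and> wt z = r} = 0" by (simp only: card.empty)
    have "(0::nat) choose r = 0" using False by simp
    then show ?thesis using c0 by (simp only:)
  qed
next
  case (Suc N)
  have c: "\<And>N P. card {z::bool list. length z = N \<and> P z} = (\<Sum>t\<in>{t. length t = N}. if P t then 1 else 0)"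
  proof -
    fix N :: nat and P :: "bool list \<Rightarrow> bool"
    have "{z. length z = N \<and> P z} = {x\<in>{t. length t = N}. P x}" by simp
    then show "card {z::bool list. length z = N \<and> P z} = (\<Sum>t\<in>{t. length t = N}. if P t then 1 else 0)"
      using card_filter_sum[OF fin_lists, of N P] by simp
  qed
  have "card {z. length z = Suc N \<and> wt z = r} = (\<Sum>t\<in>{t. length t = Suc N}. if wt t = r then 1 else 0)"
    by (rule c)
  also have "\<dots> = (\<Sum>t\<in>{t. length t = N}. (if Suc (wt t) = r then 1 else 0) + (if wt t = r then 1 else 0))"
    by (subst lists_Suc_sum) simp
  also have "\<dots> = card {z. length z = N \<and> Suc (wt z) = r} + card {z. length z = N \<and> wt z = r}"
    by (simp only: sum.distrib c)
  also have "\<dots> = Suc N choose r"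
  proof (cases r)
    case 0 then show ?thesis using Suc by simp
  next
    case (Suc r')
    then have "{z. length z = N \<and> Suc (wt z) = r} = {z. length z = N \<and> wt z = r'}" by auto
    then show ?thesis using Suc.IH Suc by simp
  qed
  finally show ?case .
qed



lemma choose_step: "Suc j * (k choose Suc j) = (k - j) * (k choose j)"
  using binomial_absorption[of j k] binomial_absorb_comp[of k j] by simp

lemma aux_ineq: fixes k N j :: nat assumes "3*k + 4 \<le> N" shows "(j+3)*(k-j) \<le> (j+1)*(N-j)"
proof (cases "j \<le> k")
  case False then show ?thesis by simp
next
  case True
  then obtain d where d: "k = j + d" using le_Suc_ex by blast
  have "(j+3)*(k-j) = (j+3)*d" using d by simp
  also have "\<dots> \<le> (j+1)*(3*d)" by (simp add: algebra_simps)
  also have "\<dots> \<le> (j+1)*(N-j)" using assms d by (intro mult_le_mono2) simp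
  finally show ?thesis .
qed

lemma binom_ineq:
  assumes "3*k + 4 \<le> N"
  shows "(k choose j) * ((j+1)*(j+2)) \<le> 2 * (N choose j)"
proof (induction j)
  case 0 then show ?case by simp
next
  case (Suc j)
  define a where "a = k choose j"
  define b where "b = N choose j"
  define a' where "a' = k choose Suc j"
  define b' where "b' = N choose Suc j"
  have ea: "(j+1) * a' = (k-j) * a" using choose_step[of j k] by (simp add: a_def a'_def)
  have eb: "(j+1) * b' = (N-j) * b" using choose_step[of j N] by (simp add: b_def b'_def)
  have IH: "a * ((j+1)*(j+2)) \<le> 2 * b" using Suc by (simp add: a_def b_def)
  have "((j+1)*(j+1)) * (a' * ((j+2)*(j+3))) = ((j+1)*a') * ((j+1)*(j+2)*(j+3))"
    by (simp add: algebra_simps)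
  also have "\<dots> = ((k-j)*a) * ((j+1)*(j+2)*(j+3))" by (simp only: ea)
  also have "\<dots> = (a * ((j+1)*(j+2))) * ((j+3)*(k-j))" by (simp only: ac_simps)
  also have "\<dots> \<le> (2*b) * ((j+3)*(k-j))" using IH by (rule mult_le_mono1)
  also have "\<dots> \<le> (2*b) * ((j+1)*(N-j))" using aux_ineq[OF assms, of j] by (rule mult_le_mono2)
  also have "\<dots> = 2 * (j+1) * ((N-j)*b)" by (simp only: ac_simps)
  also have "\<dots> = 2 * (j+1) * ((j+1)*b')" by (simp only: eb)
  also have "\<dots> = ((j+1)*(j+1)) * (2*b')" by (simp only: ac_simps)
  finally have "a' * ((j+2)*(j+3)) \<le> 2*b'" by (simp only: mult_le_cancel1) simp
  then show ?case by (simp add: a'_def b'_def algebra_simps)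
qed

lemma binom_ineq2:
  assumes "3*k + 6 \<le> n"
  shows "(k choose j) * (n*(n-1)) \<le> 2 * (n choose (j+2))"
proof -
  define N where "N = n - 2"
  have N: "n = Suc (Suc N)" using assms unfolding N_def by arith
  have e1: "Suc (Suc j) * (n choose Suc (Suc j)) = n * (Suc N choose Suc j)" unfolding N by (rule Suc_times_binomial)
  have e2: "Suc j * (Suc N choose Suc j) = Suc N * (N choose j)" by (rule Suc_times_binomial)
  have I: "(k choose j) * ((j+1)*(j+2)) \<le> 2 * (N choose j)" using assms N by (intro binom_ineq) simp
  have "((j+1)*(j+2)) * ((k choose j) * (n*(n-1))) = ((k choose j) * ((j+1)*(j+2))) * (n*(n-1))"
    by (simp only: ac_simps)
  also have "\<dots> \<le> (2 * (N choose j)) * (n*(n-1))" using I by (rule mult_le_mono1)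
  also have "\<dots> = ((j+1)*(j+2)) * (2 * (n choose (j+2)))"
  proof -
    have j2: "j+2 = Suc (Suc j)" by simp
    have "(j+1)*(j+2) * (n choose (j+2)) = (j+1)*(Suc (Suc j) * (n choose Suc (Suc j)))"
      by (simp only: j2 ac_simps)
    also have "\<dots> = n * ((j+1) * (Suc N choose Suc j))" by (simp only: e1 ac_simps)
    also have "\<dots> = n * (Suc N * (N choose j))" using e2 by simp
    finally have h: "(j+1)*(j+2) * (n choose (j+2)) = n * (Suc N * (N choose j))" .
    have n1: "n - 1 = Suc N" using N by simp
    have "2*(N choose j)*(n*Suc N) = 2*(n*(Suc N*(N choose j)))" by (simp only: ac_simps)
    also have "\<dots> = 2*((j+1)*(j+2)*(n choose (j+2)))" by (simp only: h)
    also have "\<dots> = ((j+1)*(j+2))*(2*(n choose (j+2)))" by (simp only: ac_simps)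
    finally show ?thesis unfolding n1 .
  qed
  finally show ?thesis by (simp only: mult_le_cancel1) simp
qed



lemma wt_le: "wt z \<le> length z"
  by (simp add: wt_def)

lemma ratio_bound:
  assumes nk: "3*k+6 \<le> n" and r: "r \<le> n"
  shows "real (card {d. length d = k \<and> wt d + 2 = r}) / real (n choose r) \<le> 2 / (real n * (real n - 1))"
proof -
  have npos: "real n * (real n - 1) > 0" using nk by simp
  have bpos: "real (n choose r) > 0" using r by simp
  show ?thesis
  proof (cases "r < 2")
    case True
    then have "{d. length d = k \<and> wt d + 2 = r} = {}" by auto
    then have c0: "card {d. length d = k \<and> wt d + 2 = r} = 0" by (simp only: card.empty)
    show ?thesis using npos by (simp only: c0) simp
  next
    case False
    then obtain j where j: "r = j + 2" by (metis add.commute le_Suc_ex not_less)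
    have "{d. length d = k \<and> wt d + 2 = r} = {d. length d = k \<and> wt d = j}" using j by auto
    then have c: "card {d. length d = k \<and> wt d + 2 = r} = k choose j" by (simp add: card_wt)
    have I: "(k choose j) * (n*(n-1)) \<le> 2 * (n choose r)" using binom_ineq2[OF nk, of j] j by simp
    have "real (k choose j) * (real n * (real n - 1)) \<le> 2 * real (n choose r)"
    proof -
      have "real ((k choose j) * (n*(n-1))) \<le> real (2 * (n choose r))" using I by (rule of_nat_mono)
      moreover have "real (n - 1) = real n - 1" using nk by simp
      ultimately show ?thesis by (simp only: of_nat_mult of_nat_numeral)
    qed
    then show ?thesis unfolding c using npos bpos by (simp add: divide_simps mult.commute)
  qed
qed

lemma P_bound:
  fixes p :: "bool list \<Rightarrow> real" and n k :: nat and Zp :: "bool list"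
  assumes n: "n = length Zp + k" and nk: "3*k+6 \<le> n" and wZ: "wt Zp = 2"
    and nonneg: "\<And>z. 0 \<le> p z" and sum1: "(\<Sum>z\<in>{z. length z = n}. p z) = 1"
    and inv: "\<And>z z'. length z = n \<Longrightarrow> length z' = n \<Longrightarrow> wt z = wt z' \<Longrightarrow> p z = p z'"
  shows "(\<Sum>d\<in>{d. length d = k}. p (Zp @ d)) \<le> 2 / (real n * (real n - 1))"
proof -
  define Ln where "Ln = {z :: bool list. length z = n}"
  define Lk where "Lk = {z :: bool list. length z = k}"
  define N where "N = (\<lambda>r. real (n choose r))"
  define B where "B = 2 / (real n * (real n - 1))"
  have finLn: "finite Ln" and finLk: "finite Lk" unfolding Ln_def Lk_def by (rule fin_lists)+
  have Npos: "\<And>z. z \<in> Ln \<Longrightarrow> N (wt z) > 0"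
    unfolding N_def Ln_def using wt_le by fastforce
  have cnt: "\<And>r. card {z\<in>Ln. wt z = r} = n choose r"
    unfolding Ln_def using card_wt by simp
  have step1: "p z = (\<Sum>z'\<in>Ln. if wt z' = wt z then p z' / N (wt z') else 0)" if z: "z \<in> Ln" for z
  proof -
    have "(\<Sum>z'\<in>Ln. if wt z' = wt z then p z' / N (wt z') else 0)
        = (\<Sum>z'\<in>Ln. if wt z' = wt z then p z / N (wt z) else 0)"
    proof (rule sum.cong)
      fix z' assume z': "z' \<in> Ln"
      show "(if wt z' = wt z then p z' / N (wt z') else 0) = (if wt z' = wt z then p z / N (wt z) else 0)"
      proof (cases "wt z' = wt z")
        case True
        have "p z' = p z" by (rule inv) (use z z' True in \<open>simp_all add: Ln_def\<close>)
        then show ?thesis using True by simp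
      qed simp
    qed simp
    also have "\<dots> = (\<Sum>z'\<in>{z'\<in>Ln. wt z' = wt z}. p z / N (wt z))"
      using sum.inter_filter[OF finLn, of "\<lambda>_. p z / N (wt z)" "\<lambda>z'. wt z' = wt z"] by simp
    also have "\<dots> = real (card {z'\<in>Ln. wt z' = wt z}) * (p z / N (wt z))" by simp
    also have "\<dots> = p z" using Npos[OF z] unfolding cnt N_def by simp
    finally show ?thesis by simp
  qed
  have ZL: "\<And>d. d \<in> Lk \<Longrightarrow> Zp @ d \<in> Ln" unfolding Lk_def Ln_def n by simp
  have "(\<Sum>d\<in>Lk. p (Zp @ d)) = (\<Sum>d\<in>Lk. \<Sum>z'\<in>Ln. if wt z' = wt d + 2 then p z' / N (wt z') else 0)"
  proof (rule sum.cong)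
    fix d assume d: "d \<in> Lk"
    have w: "wt (Zp @ d) = wt d + 2" using wZ by simp
    show "p (Zp @ d) = (\<Sum>z'\<in>Ln. if wt z' = wt d + 2 then p z' / N (wt z') else 0)"
      using step1[OF ZL[OF d]] unfolding w .
  qed simp
  also have "\<dots> = (\<Sum>z'\<in>Ln. \<Sum>d\<in>Lk. if wt d + 2 = wt z' then p z' / N (wt z') else 0)"
    by (subst sum.swap) (simp add: eq_commute)
  also have "\<dots> = (\<Sum>z'\<in>Ln. p z' * (real (card {d\<in>Lk. wt d + 2 = wt z'}) / N (wt z')))"
  proof (rule sum.cong)
    fix z' assume "z' \<in> Ln"
    have "(\<Sum>d\<in>Lk. if wt d + 2 = wt z' then p z' / N (wt z') else 0)
        = (\<Sum>d\<in>{d\<in>Lk. wt d + 2 = wt z'}. p z' / N (wt z'))"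
      using sum.inter_filter[OF finLk, of "\<lambda>_. p z' / N (wt z')" "\<lambda>d. wt d + 2 = wt z'"] by simp
    then show "(\<Sum>d\<in>Lk. if wt d + 2 = wt z' then p z' / N (wt z') else 0)
        = p z' * (real (card {d\<in>Lk. wt d + 2 = wt z'}) / N (wt z'))" by simp
  qed simp
  also have "\<dots> \<le> (\<Sum>z'\<in>Ln. p z' * B)"
  proof (rule sum_mono)
    fix z' assume z': "z' \<in> Ln"
    have "{d\<in>Lk. wt d + 2 = wt z'} = {d. length d = k \<and> wt d + 2 = wt z'}" unfolding Lk_def by simp
    then have "real (card {d\<in>Lk. wt d + 2 = wt z'}) / N (wt z') \<le> B"
      unfolding N_def B_def using ratio_bound[OF nk, of "wt z'"] z' wt_le[of z'] by (simp add: Ln_def)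
    then show "p z' * (real (card {d\<in>Lk. wt d + 2 = wt z'}) / N (wt z')) \<le> p z' * B"
      using nonneg[of z'] by (rule mult_left_mono)
  qed
  also have "\<dots> = B" using sum1 unfolding Ln_def by (simp add: sum_distrib_right[symmetric])
  finally show ?thesis unfolding Lk_def B_def .
qed



fun Lb :: "bool list \<Rightarrow> nat" where
  "Lb (a#b#t) = (if a \<and> b then Suc (Lb t) else 0)"
| "Lb _ = 0"

lemma Lb_props: "(\<forall>i<2*Lb t. t!i) \<and> 2*Lb t \<le> length t \<and> (2*Lb t + 1 < length t \<longrightarrow> \<not>(t!(2*Lb t) \<and> t!(2*Lb t+1)))"
proof (induction t rule: Lb.induct)
  case (1 a b t)
  show ?case
  proof (cases "a \<and> b")
    case True
    have "\<forall>i<2*Lb (a#b#t). (a#b#t)!i"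
    proof (intro allI impI)
      fix i assume i: "i < 2*Lb (a#b#t)"
      show "(a#b#t)!i"
      proof (cases "i < 2")
        case True then show ?thesis using \<open>a \<and> b\<close> by (cases i) (auto simp: less_Suc_eq)
      next
        case False
        then have "i - 2 < 2 * Lb t" using i \<open>a \<and> b\<close> by simp
        then have "t!(i-2)" using "1.IH" True by blast
        moreover have "(a#b#t)!i = t!(i-2)"
        proof -
          obtain i' where i': "i = Suc (Suc i')" using False by (metis add_2_eq_Suc le_add_diff_inverse not_less)
          show ?thesis unfolding i' by simp
        qed
        ultimately show ?thesis by simp
      qed
    qed
    then show ?thesis using "1.IH" True by simp
  next
    case False
    then have "Lb (a#b#t) = 0" by simp
    then show ?thesis using False by auto
  qed
qed auto

lemma card_Lq: "card {t :: bool list. length t = q} = 2^q"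
  using card_lists_length_eq[of "UNIV :: bool set" q] by simp

lemma Lb_sum: "(\<Sum>t\<in>{t. length t = q}. real (Lb t)) \<le> 2^q"
proof (induction q rule: less_induct)
  case (less q)
  show ?case
  proof (cases q)
    case 0 then show ?thesis by simp
  next
    case (Suc q1)
    show ?thesis
    proof (cases q1)
      case 0
      have "(\<Sum>t\<in>{t. length t = q}. real (Lb t)) = 0"
        by (rule sum.neutral) (use Suc 0 in \<open>auto simp: length_Suc_conv\<close>)
      then show ?thesis by simp
    next
      case (Suc q')
      have qq: "q = Suc (Suc q')" using \<open>q = Suc q1\<close> Suc by simp
      have "(\<Sum>t\<in>{t. length t = q}. real (Lb t)) = (\<Sum>t\<in>{t. length t = q'}. 1 + real (Lb t))"
        unfolding qq by (simp add: lists_Suc_sum sum.distrib[symmetric])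
      also have "\<dots> = 2^q' + (\<Sum>t\<in>{t. length t = q'}. real (Lb t))"
        by (simp add: sum.distrib card_Lq)
      also have "\<dots> \<le> 2^q' + 2^q'" using less[of q'] qq by simp
      also have "\<dots> \<le> 2^q" unfolding qq by simp
      finally show ?thesis .
    qed
  qed
qed

lemma H_le:
  assumes t: "length t = k" and ke: "even k" and nn: "n = 2*m+2+k" and d: "0 \<le> \<delta>"
  shows "HLB \<delta> n (replicate (2*m+2) True @ t) \<le> real (2*m + 4 + 2*Lb t)"
proof -
  define c where "c = 2*m+2"
  define y where "y = replicate c True @ t"
  have ly: "length y = n" unfolding y_def c_def using t nn by simp
  have ne: "even n" using nn ke by simp
  have y1: "\<And>i. i < c \<Longrightarrow> y!i" unfolding y_def by (simp add: nth_append)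
  have y2: "\<And>i. c \<le> i \<Longrightarrow> y!i = t!(i-c)" unfolding y_def by (simp add: nth_append)
  define j where "j = Lb t"
  have P1: "\<forall>i<2*j. t!i" and P2: "2*j \<le> k" and P3: "2*j+1 < k \<longrightarrow> \<not>(t!(2*j) \<and> t!(2*j+1))"
    using Lb_props[of t] t unfolding j_def by auto
  show ?thesis
  proof (cases "\<forall>i<n. y!i")
    case True
    have D: "DLB n y = n" using True by (rule DLB_all)
    have H: "HLB \<delta> n y = real n" by (simp add: HLB_def D)
    have tall: "\<forall>i<k. t!i"
    proof (intro allI impI)
      fix i assume "i < k"
      then have "y!(c+i)" using True nn c_def by simp
      then show "t!i" using y2[of "c+i"] by simp
    qed
    have "\<not> (2*j+1 < k)" using P3 tall by (metis add_lessD1 add_Suc_right)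
    then have "k \<le> 2*j" using ke P2 by presburger
    then show ?thesis using H nn unfolding y_def c_def j_def by simp
  next
    case False
    then obtain i where i: "i < n" "\<not> y!i" by blast
    have ic: "c \<le> i" using y1 i by (meson not_less)
    have "\<not> t!(i-c)" using y2[OF ic] i by simp
    moreover have "i - c < k" using i ic nn c_def by simp
    ultimately have "2*j \<le> i - c" using P1 by (meson not_less)
    then have "2*j < k" using \<open>i - c < k\<close> by simp
    then have "2*j+1 < k" using ke by presburger
    then have blk: "\<not>(t!(2*j) \<and> t!(2*j+1))" using P3 by simp
    obtain i0 where i0: "i0 < n" "\<not> y!i0" "i0 div 2 = m+1+j"
    proof (cases "t!(2*j)")
      case True
      then have "\<not> t!(2*j+1)" using blk by simp
      moreover have "y!(c+2*j+1) = t!(2*j+1)" using y2[of "c+2*j+1"] by simp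
      moreover have "c+2*j+1 < n" using \<open>2*j+1 < k\<close> nn c_def by simp
      moreover have "(c+2*j+1) div 2 = m+1+j" unfolding c_def by simp
      ultimately show ?thesis using that by metis
    next
      case False
      moreover have "y!(c+2*j) = t!(2*j)" using y2[of "c+2*j"] by simp
      moreover have "c+2*j < n" using \<open>2*j+1 < k\<close> nn c_def by simp
      moreover have "(c+2*j) div 2 = m+1+j" unfolding c_def by simp
      ultimately show ?thesis using that by metis
    qed
    have "DLB n y \<le> 2*(m+1+j)+1" using DLB_false_le[OF ly ne i0(1,2)] i0(3) by simp
    then have "DLB n y div 2 \<le> m+1+j" by simp
    then have "HLB \<delta> n y \<le> 2 * real (m+1+j) + 2" using HLB_le[OF d ne, of y] by simp
    then show ?thesis unfolding y_def c_def j_def by simp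
  qed
qed

lemma G_bound:
  assumes ke: "even k" and nn: "n = 2*m+2+k" and d: "0 \<le> \<delta>"
  shows "(\<Sum>t\<in>{t. length t = k}. HLB \<delta> n (replicate (2*m+2) True @ t) - 2*m) \<le> 6 * 2^k"
proof -
  have "(\<Sum>t\<in>{t. length t = k}. HLB \<delta> n (replicate (2*m+2) True @ t) - 2*m)
      \<le> (\<Sum>t\<in>{t. length t = k}. 4 + 2 * real (Lb t))"
  proof (rule sum_mono)
    fix t assume "t \<in> {t :: bool list. length t = k}"
    then show "HLB \<delta> n (replicate (2*m+2) True @ t) - 2*m \<le> 4 + 2 * real (Lb t)"
      using H_le[of t k n m \<delta>] ke nn d by simp
  qed
  also have "\<dots> = 4 * 2^k + 2 * (\<Sum>t\<in>{t. length t = k}. real (Lb t))"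
    by (simp add: sum.distrib sum_distrib_left card_Lq)
  also have "\<dots> \<le> 4 * 2^k + 2 * 2^k" using Lb_sum[of k] by simp
  finally show ?thesis by simp
qed



lemma F_char:
  assumes nn: "n = 2*m+2+k" and ke: "even k" and ls: "length s = k" and lz: "length z = n"
  shows "(HLB \<delta> n (xor_bits z (replicate (2*m) True @ [False, False] @ s)) - HLB \<delta> n (replicate (2*m) True @ [False, False] @ s))
     * (if DLB n (xor_bits z (replicate (2*m) True @ [False, False] @ s)) \<ge> DLB n (replicate (2*m) True @ [False, False] @ s) then 1 else 0)
   = (if take (2*m+2) z = replicate (2*m) False @ [True, True]
      then HLB \<delta> n (replicate (2*m+2) True @ xor_bits (drop (2*m+2) z) s) - 2*m else 0)"
proof -
  define c where "c = 2*m+2"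
  define x where "x = replicate (2*m) True @ [False, False] @ s"
  define y where "y = xor_bits z x"
  define Zp where "Zp = replicate (2*m) False @ [True, True]"
  have ne: "even n" using nn ke by simp
  have lx: "length x = n" unfolding x_def using nn ls by simp
  have ly: "length y = n" unfolding y_def using lx lz by simp
  have x1: "\<And>i. i < 2*m \<Longrightarrow> x!i" unfolding x_def by (simp add: nth_append)
  have x2: "\<not> x!(2*m)" "\<not> x!(2*m+1)" unfolding x_def by (simp_all add: nth_append)
  have x3: "\<And>i. c \<le> i \<Longrightarrow> x!i = s!(i-c)" unfolding x_def c_def
    by (simp add: nth_append)
  have yn: "\<And>i. i < n \<Longrightarrow> y!i = (z!i \<noteq> x!i)" unfolding y_def using lx lz by (simp add: xor_nth)
  have mn: "m < n div 2" using nn by simp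
  have DX: "DLB n x = 2*m+1"
    using DLB_block[OF lx ne mn] x1 x2 by auto
  have HX: "HLB \<delta> n x = 2*m" using HLB_odd[OF DX ne] by simp
  show ?thesis
  proof (cases "take (2*m+2) z = Zp")
    case True
    have z1: "\<And>i. i < 2*m \<Longrightarrow> \<not> z!i"
    proof -
      fix i assume i: "i < 2*m"
      have "take (2*m+2) z ! i = Zp ! i" using True by simp
      then show "\<not> z!i" using i unfolding Zp_def by (simp add: nth_append)
    qed
    have z2: "z!(2*m)" "z!(2*m+1)"
    proof -
      have "take (2*m+2) z ! (2*m) = Zp ! (2*m)" "take (2*m+2) z ! (2*m+1) = Zp ! (2*m+1)" using True by simp_all
      then show "z!(2*m)" "z!(2*m+1)" unfolding Zp_def by (simp_all add: nth_append)
    qed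
    have yeq: "y = replicate c True @ xor_bits (drop c z) s"
    proof (rule nth_equalityI)
      show "length y = length (replicate c True @ xor_bits (drop c z) s)" using ly lz ls nn c_def by simp
    next
      fix i assume "i < length y"
      then have i: "i < n" using ly by simp
      show "y!i = (replicate c True @ xor_bits (drop c z) s) ! i"
      proof (cases "i < c")
        case True
        then have "i < 2*m \<or> i = 2*m \<or> i = 2*m+1" unfolding c_def by auto
        then have "y!i" using yn[OF i] z1 z2 x1 x2 by auto
        then show ?thesis using True by (simp add: nth_append)
      next
        case False
        have "(replicate c True @ xor_bits (drop c z) s) ! i = xor_bits (drop c z) s ! (i - c)"
          using False by (simp add: nth_append)
        also have "\<dots> = (drop c z ! (i-c) \<noteq> s!(i-c))" using False i lz ls nn c_def by (simp add: xor_nth)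
        also have "drop c z ! (i-c) = z!i" using False i lz by simp
        finally have "(replicate c True @ xor_bits (drop c z) s) ! i = (z!i \<noteq> s!(i-c))" .
        then show ?thesis using yn[OF i] x3 False by simp
      qed
    qed
    have yc: "\<forall>i<c. y!i" unfolding yeq by (simp add: nth_append)
    have "DLB n y \<ge> 2*(m+1)"
      by (rule DLB_true_ge[OF ly ne]) (use nn yc c_def in auto)
    then have "DLB n y \<ge> DLB n x" using DX by simp
    then show ?thesis using True HX yeq unfolding c_def x_def y_def Zp_def by simp
  next
    case False
    have "(HLB \<delta> n y - HLB \<delta> n x) * (if DLB n y \<ge> DLB n x then 1 else 0) = 0"
    proof (cases "\<exists>i<2*m. z!i")
      case True
      then obtain i where i: "i < 2*m" "z!i" by blast
      have "\<not> y!i" using yn[of i] i x1 nn by simp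
      then have "DLB n y \<le> 2*(i div 2)+1" using DLB_false_le[OF ly ne, of i] i nn by simp
      also have "\<dots> < 2*m+1" using i by simp
      finally show ?thesis using DX by simp
    next
      case nz: False
      have "\<not>(z!(2*m) \<and> z!(2*m+1))"
      proof
        assume zz: "z!(2*m) \<and> z!(2*m+1)"
        have "take (2*m+2) z = Zp"
        proof (rule nth_equalityI)
          show "length (take (2*m+2) z) = length Zp" using lz nn Zp_def by simp
        next
          fix i assume "i < length (take (2*m+2) z)"
          then have i: "i < 2*m+2" by simp
          then have "i < 2*m \<or> i = 2*m \<or> i = 2*m+1" by auto
          then show "take (2*m+2) z ! i = Zp ! i" using i nz zz unfolding Zp_def by (auto simp: nth_append)
        qed
        then show False using False by simp
      qed
      moreover have "\<forall>l<m. y!(2*l) \<and> y!(2*l+1)" using yn x1 nz nn by auto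
      moreover have "y!(2*m) = z!(2*m)" "y!(2*m+1) = z!(2*m+1)" using yn x2 nn by auto
      ultimately have DY: "DLB n y = (if \<not>z!(2*m) \<and> \<not>z!(2*m+1) then 2*m+1 else 2*m)"
        using DLB_block[OF ly ne mn] by simp
      show ?thesis
      proof (cases "\<not>z!(2*m) \<and> \<not>z!(2*m+1)")
        case True
        then have "DLB n y = 2*m+1" using DY by simp
        then have "HLB \<delta> n y = 2*m" using HLB_odd ne by simp
        then show ?thesis using HX by simp
      next
        case False
        then have "DLB n y = 2*m" using DY by (simp only: if_False)
        then show ?thesis using DX by simp
      qed
    qed
    then show ?thesis using False unfolding c_def x_def y_def Zp_def by simp
  qed
qed



lemma integral_bind_fin:
  fixes f :: "'b \<Rightarrow> real"
  assumes A: "finite A" and B: "finite B" and MB: "set_pmf M \<subseteq> B"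
    and NA: "\<And>x. x \<in> B \<Longrightarrow> set_pmf (N x) \<subseteq> A"
  shows "measure_pmf.expectation (bind_pmf M N) f = measure_pmf.expectation M (\<lambda>x. measure_pmf.expectation (N x) f)"
proof -
  have inner: "measure_pmf.expectation (N x) f = (\<Sum>a\<in>A. f a * pmf (N x) a)" if "x \<in> B" for x
    by (rule integral_measure_pmf_real) (use A NA[OF that] in auto)
  have pb: "pmf (bind_pmf M N) a = (\<Sum>x\<in>B. pmf (N x) a * pmf M x)" for a
    unfolding pmf_bind by (rule integral_measure_pmf_real) (use B MB in auto)
  have "measure_pmf.expectation (bind_pmf M N) f = (\<Sum>a\<in>A. f a * pmf (bind_pmf M N) a)"
    by (rule integral_measure_pmf_real) (use A MB NA in auto)
  also have "\<dots> = (\<Sum>a\<in>A. \<Sum>x\<in>B. f a * pmf (N x) a * pmf M x)"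
    by (simp add: pb sum_distrib_left mult.assoc)
  also have "\<dots> = (\<Sum>x\<in>B. (\<Sum>a\<in>A. f a * pmf (N x) a) * pmf M x)"
    by (subst sum.swap) (simp add: sum_distrib_right)
  also have "\<dots> = (\<Sum>x\<in>B. measure_pmf.expectation (N x) f * pmf M x)"
    by (rule sum.cong) (simp_all add: inner)
  also have "\<dots> = measure_pmf.expectation M (\<lambda>x. measure_pmf.expectation (N x) f)"
    by (rule integral_measure_pmf_real[symmetric]) (use B MB in auto)
  finally show ?thesis .
qed

lemma mset_bool_eq:
  assumes "length z = length z'" "wt z = wt z'"
  shows "mset z = mset z'"
proof (rule multiset_eqI)
  fix b :: bool
  have T: "count (mset u) True = wt u" for u :: "bool list"
  proof (induction u)
    case (Cons a u) then show ?case by (cases a) simp_all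
  qed simp
  have F: "count (mset u) False = length u - wt u" for u :: "bool list"
  proof (induction u)
    case (Cons a u) then show ?case using wt_le[of u] by (cases a) simp_all
  qed simp
  show "count (mset z) b = count (mset z') b"
    by (cases b) (simp_all only: T F assms)
qed

lemma permute_replicate:
  assumes "\<sigma> permutes {..<n}"
  shows "permute_list \<sigma> (replicate n b) = replicate n b"
proof (rule nth_equalityI)
  fix i assume "i < length (permute_list \<sigma> (replicate n b))"
  then have i: "i < n" by simp
  then have "\<sigma> i < n" using permutes_in_image[OF assms, of i] by simp
  then show "permute_list \<sigma> (replicate n b) ! i = replicate n b ! i" using i assms by (simp add: permute_list_nth)
qed simp

lemma xor_comm: "xor_bits a b = xor_bits b a"
  unfolding xor_bits_def by (rule nth_equalityI) auto

lemma wt_repF: "wt (replicate j False) = 0"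
  by (induction j) simp_all

theorem lemma8:
  fixes n m :: nat and \<delta> :: real
    and V :: "bool list \<Rightarrow> bool list pmf"
    and X :: "bool list pmf"
  assumes n_even: "even n" and n_pos: "n > 0"
    and m_lo: "real n / 3 \<le> real m" and m_hi: "real m \<le> real n / 2 - 1"
    and delta: "0 < \<delta>" "\<delta> < 2"
    and X_supp: "set_pmf X \<subseteq> {x. length x = n \<and> DLB n x = 2*m+1}"
    and X_suffix: "X = bind_pmf X (\<lambda>x. map_pmf (\<lambda>s. take (2*m+2) x @ s)
                          (pmf_of_set {s :: bool list. length s = n - (2*m+2)}))"
    and V: "unary_unbiased n V"
  shows "measure_pmf.expectation (bind_pmf X (\<lambda>x. map_pmf (\<lambda>y. (x, y)) (V x)))
           (\<lambda>(x, y). (HLB \<delta> n y - HLB \<delta> n x) * (if DLB n y \<ge> DLB n x then 1 else 0))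
         \<le> 16 / (real n)^2"
proof -
  define c where "c = 2*m+2"
  define k where "k = n - c"
  define pre where "pre = replicate (2*m) True @ [False, False]"
  define Zp where "Zp = replicate (2*m) False @ [True, True]"
  define Ln where "Ln = {z :: bool list. length z = n}"
  define Lk where "Lk = {z :: bool list. length z = k}"
  define U where "U = pmf_of_set Lk"
  define Z0 where "Z0 = replicate n False"
  define p where "p = pmf (V Z0)"
  define F where "F = (\<lambda>(x, y). (HLB \<delta> n y - HLB \<delta> n x) * (if DLB n y \<ge> DLB n x then 1 else (0::real)))"
  define H where "H = (\<lambda>t. HLB \<delta> n (replicate (2*m+2) True @ t) - 2*m)"
  have m3: "n \<le> 3*m"
  proof -
    have "real n \<le> 3 * real m" using m_lo by simp
    then show ?thesis by linarith
  qed
  have m2: "2*m+2 \<le> n"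
  proof -
    have "2 * real m + 2 \<le> real n" using m_hi by simp
    then show ?thesis by linarith
  qed
  have nn: "n = 2*m+2+k" using m2 unfolding k_def c_def by simp
  have ke: "even k" using nn n_even by presburger
  have nk: "3*k+6 \<le> n" using nn m3 by simp
  have finLn: "finite Ln" and finLk: "finite Lk" unfolding Ln_def Lk_def by (rule fin_lists)+
  have Lkne: "Lk \<noteq> {}" unfolding Lk_def by (metis (mono_tags) empty_iff length_replicate mem_Collect_eq)
  have cardLk: "card Lk = 2^k" unfolding Lk_def by (rule card_Lq)
  have setU: "set_pmf U = Lk" unfolding U_def using finLk Lkne by simp
  have Vsupp: "\<And>x. length x = n \<Longrightarrow> set_pmf (V x) \<subseteq> Ln" using V unfolding unary_unbiased_def Ln_def by blast
  have Vxor: "\<And>x y z. length x = n \<Longrightarrow> length y = n \<Longrightarrow> length z = n \<Longrightarrow>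
        pmf (V x) y = pmf (V (xor_bits x z)) (xor_bits y z)" using V unfolding unary_unbiased_def by blast
  have Vperm: "\<And>\<sigma> x y. \<sigma> permutes {..<n} \<Longrightarrow> length x = n \<Longrightarrow> length y = n \<Longrightarrow>
        pmf (V x) y = pmf (V (permute_list \<sigma> x)) (permute_list \<sigma> y)" using V unfolding unary_unbiased_def by blast

  have take_pre: "take c x = pre" if x: "x \<in> set_pmf X" for x
  proof -
    have lx: "length x = n" and dx: "DLB n x = 2*m+1" using X_supp x by auto
    have na: "\<not>(\<forall>i<n. x!i)"
    proof
      assume "\<forall>i<n. x!i"
      then have "DLB n x = n" by (rule DLB_all)
      then have "n = 2*m+1" using dx by simp
      then show False using n_even by simp
    qed
    obtain l where l: "l < n div 2" "\<forall>l'<l. x!(2*l') \<and> x!(2*l'+1)" "\<not>(x!(2*l) \<and> x!(2*l+1))"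
      "DLB n x = (if \<not>x!(2*l) \<and> \<not>x!(2*l+1) then 2*l+1 else 2*l)"
      using DLB_cases[OF lx n_even na] by blast
    have bf: "\<not>x!(2*l) \<and> \<not>x!(2*l+1)"
    proof (rule ccontr)
      assume "\<not> (\<not>x!(2*l) \<and> \<not>x!(2*l+1))"
      then have "DLB n x = 2*l" using l(4) by (simp only: if_False)
      then show False using dx by presburger
    qed
    then have "DLB n x = 2*l+1" using l(4) by simp
    then have lm: "l = m" using dx by simp
    show ?thesis
    proof (rule nth_equalityI)
      show "length (take c x) = length pre" using lx nn unfolding c_def pre_def by simp
    next
      fix i assume "i < length (take c x)"
      then have i: "i < c" by simp
      show "take c x ! i = pre ! i"
      proof (cases "i < 2*m")
        case True
        then have "i div 2 < m" by simp
        then have "x!(2*(i div 2)) \<and> x!(2*(i div 2)+1)" using l(2) lm by blast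
        moreover have "i = 2*(i div 2) \<or> i = 2*(i div 2)+1" by auto
        ultimately have "x!i" by metis
        then show ?thesis using True i by (simp add: pre_def nth_append)
      next
        case False
        then have "i = 2*m \<or> i = 2*m+1" using i c_def by auto
        then show ?thesis using bf lm i by (auto simp: pre_def nth_append)
      qed
    qed
  qed
  have X_eq: "X = map_pmf (\<lambda>s. pre @ s) U"
  proof -
    have "X = bind_pmf X (\<lambda>x. map_pmf (\<lambda>s. take (2*m+2) x @ s) (pmf_of_set {s :: bool list. length s = n - (2*m+2)}))"
      by (rule X_suffix)
    also have "\<dots> = bind_pmf X (\<lambda>x. map_pmf (\<lambda>s. pre @ s) U)"
    proof (rule bind_pmf_cong)
      fix x assume x: "x \<in> set_pmf X"
      have tx: "take (2*m+2) x = pre" using take_pre[OF x] c_def by simp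
      show "map_pmf (\<lambda>s. take (2*m+2) x @ s) (pmf_of_set {s :: bool list. length s = n - (2*m+2)}) = map_pmf (\<lambda>s. pre @ s) U"
        unfolding tx U_def Lk_def k_def c_def ..
    qed simp
    also have "\<dots> = map_pmf (\<lambda>s. pre @ s) U" by simp
    finally show ?thesis .
  qed
  have lpre: "\<And>s. s \<in> Lk \<Longrightarrow> length (pre @ s) = n" unfolding Lk_def pre_def using nn by simp

  define g where "g = (\<lambda>s. measure_pmf.expectation (V (pre @ s)) (\<lambda>y. F (pre @ s, y)))"
  have J: "bind_pmf X (\<lambda>x. map_pmf (\<lambda>y. (x, y)) (V x)) = bind_pmf U (\<lambda>s. map_pmf (\<lambda>y. (pre @ s, y)) (V (pre @ s)))"
    unfolding X_eq by (simp add: bind_map_pmf)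
  have E1: "measure_pmf.expectation (bind_pmf X (\<lambda>x. map_pmf (\<lambda>y. (x, y)) (V x))) F = (\<Sum>s\<in>Lk. g s) / card Lk"
  proof -
    have "measure_pmf.expectation (bind_pmf U (\<lambda>s. map_pmf (\<lambda>y. (pre @ s, y)) (V (pre @ s)))) F
        = measure_pmf.expectation U (\<lambda>s. measure_pmf.expectation (map_pmf (\<lambda>y. (pre @ s, y)) (V (pre @ s))) F)"
    proof (rule integral_bind_fin[of "Ln \<times> Ln" Lk])
      show "finite (Ln \<times> Ln)" using finLn by simp
      show "finite Lk" by (rule finLk)
      show "set_pmf U \<subseteq> Lk" using setU by simp
      fix s assume "s \<in> Lk"
      then show "set_pmf (map_pmf (\<lambda>y. (pre @ s, y)) (V (pre @ s))) \<subseteq> Ln \<times> Ln"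
        using Vsupp[OF lpre] lpre unfolding Ln_def by auto
    qed
    also have "\<dots> = measure_pmf.expectation U g" unfolding g_def by simp
    also have "\<dots> = (\<Sum>s\<in>Lk. g s) / card Lk" unfolding U_def by (rule integral_pmf_of_set[OF Lkne finLk])
    finally show ?thesis unfolding J .
  qed
  have gs: "g s = (\<Sum>z\<in>Ln. (if take c z = Zp then H (xor_bits (drop c z) s) * p z else 0))" if s: "s \<in> Lk" for s
  proof -
    define x where "x = pre @ s"
    have lx: "length x = n" unfolding x_def using lpre[OF s] .
    have "g s = (\<Sum>y\<in>Ln. F (x, y) * pmf (V x) y)"
      unfolding g_def x_def[symmetric] by (rule integral_measure_pmf_real) (use finLn Vsupp[OF lx] in auto)
    also have "\<dots> = (\<Sum>y\<in>Ln. F (x, y) * p (xor_bits y x))"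
    proof (rule sum.cong)
      fix y assume "y \<in> Ln"
      then have ly: "length y = n" unfolding Ln_def by simp
      have "pmf (V x) y = pmf (V (xor_bits x x)) (xor_bits y x)" by (rule Vxor[OF lx ly lx])
      also have "xor_bits x x = Z0" unfolding Z0_def xor_self lx ..
      finally show "F (x, y) * pmf (V x) y = F (x, y) * p (xor_bits y x)" unfolding p_def by simp
    qed simp
    also have "\<dots> = (\<Sum>z\<in>Ln. F (x, xor_bits z x) * p z)"
    proof (rule sum.reindex_bij_witness[of _ "\<lambda>z. xor_bits z x" "\<lambda>y. xor_bits y x"])
      fix z assume "z \<in> Ln"
      then have lz: "length z = n" unfolding Ln_def by simp
      show "xor_bits (xor_bits z x) x = z" using xor_inv lz lx by simp
      show "xor_bits z x \<in> Ln" using lz lx unfolding Ln_def by simp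
    next
      fix y assume "y \<in> Ln"
      then have ly: "length y = n" unfolding Ln_def by simp
      show "xor_bits (xor_bits y x) x = y" using xor_inv ly lx by simp
      show "xor_bits y x \<in> Ln" using ly lx unfolding Ln_def by simp
      show "F (x, xor_bits (xor_bits y x) x) * p (xor_bits y x) = F (x, y) * p (xor_bits y x)"
        using xor_inv ly lx by simp
    qed
    also have "\<dots> = (\<Sum>z\<in>Ln. (if take c z = Zp then H (xor_bits (drop c z) s) * p z else 0))"
    proof (rule sum.cong)
      fix z assume "z \<in> Ln"
      then have lz: "length z = n" unfolding Ln_def by simp
      have ls: "length s = k" using s unfolding Lk_def by simp
      have "F (x, xor_bits z x) = (if take c z = Zp then H (xor_bits (drop c z) s) else 0)"
        using F_char[OF nn ke ls lz, of \<delta>] unfolding F_def H_def x_def pre_def Zp_def c_def by simp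
      then show "F (x, xor_bits z x) * p z = (if take c z = Zp then H (xor_bits (drop c z) s) * p z else 0)"
        by simp
    qed simp
    finally show ?thesis .
  qed
  define S where "S = (\<Sum>t\<in>Lk. H t)"
  define P where "P = (\<Sum>d\<in>Lk. p (Zp @ d))"
  have sumg: "(\<Sum>s\<in>Lk. g s) = S * P"
  proof -
    have "(\<Sum>s\<in>Lk. g s) = (\<Sum>s\<in>Lk. \<Sum>z\<in>Ln. (if take c z = Zp then H (xor_bits (drop c z) s) * p z else 0))"
      by (rule sum.cong) (simp_all add: gs)
    also have "\<dots> = (\<Sum>z\<in>Ln. \<Sum>s\<in>Lk. (if take c z = Zp then H (xor_bits (drop c z) s) * p z else 0))"
      by (rule sum.swap)
    also have "\<dots> = (\<Sum>z\<in>Ln. (if take c z = Zp then S * p z else 0))"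
    proof (rule sum.cong)
      fix z assume "z \<in> Ln"
      then have lz: "length z = n" unfolding Ln_def by simp
      define d where "d = drop c z"
      have ld: "length d = k" unfolding d_def using lz k_def by simp
      have "(\<Sum>s\<in>Lk. H (xor_bits d s)) = S"
        unfolding S_def
      proof (rule sum.reindex_bij_witness[of _ "\<lambda>t. xor_bits d t" "\<lambda>s. xor_bits d s"])
        fix t assume "t \<in> Lk"
        then have lt: "length t = k" unfolding Lk_def by simp
        show "xor_bits d (xor_bits d t) = t" using xor_inv[of t d] lt ld by (simp add: xor_comm)
        show "xor_bits d t \<in> Lk" using lt ld unfolding Lk_def by simp
      next
        fix s assume "s \<in> Lk"
        then have ls: "length s = k" unfolding Lk_def by simp
        show "xor_bits d (xor_bits d s) = s" using xor_inv[of s d] ls ld by (simp add: xor_comm)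
        show "xor_bits d s \<in> Lk" using ls ld unfolding Lk_def by simp
        show "H (xor_bits d s) = H (xor_bits d s)" ..
      qed
      then show "(\<Sum>s\<in>Lk. (if take c z = Zp then H (xor_bits (drop c z) s) * p z else 0))
          = (if take c z = Zp then S * p z else 0)"
        unfolding d_def[symmetric] by (simp add: sum_distrib_right[symmetric])
    qed simp
    also have "\<dots> = (\<Sum>z\<in>{z\<in>Ln. take c z = Zp}. S * p z)"
      using sum.inter_filter[OF finLn, of "\<lambda>z. S * p z" "\<lambda>z. take c z = Zp"] by simp
    also have "{z\<in>Ln. take c z = Zp} = (\<lambda>d. Zp @ d) ` Lk"
    proof (rule set_eqI)
      fix z
      show "z \<in> {z\<in>Ln. take c z = Zp} \<longleftrightarrow> z \<in> (\<lambda>d. Zp @ d) ` Lk"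
      proof
        assume "z \<in> {z\<in>Ln. take c z = Zp}"
        then have lz: "length z = n" and tz: "take c z = Zp" unfolding Ln_def by auto
        have "z = Zp @ drop c z" using tz by (metis append_take_drop_id)
        moreover have "drop c z \<in> Lk" using lz unfolding Lk_def k_def by simp
        ultimately show "z \<in> (\<lambda>d. Zp @ d) ` Lk" by blast
      next
        assume "z \<in> (\<lambda>d. Zp @ d) ` Lk"
        then obtain d where "d \<in> Lk" "z = Zp @ d" by blast
        then show "z \<in> {z\<in>Ln. take c z = Zp}" unfolding Lk_def Ln_def Zp_def c_def using nn by simp
      qed
    qed
    also have "(\<Sum>z\<in>(\<lambda>d. Zp @ d) ` Lk. S * p z) = (\<Sum>d\<in>Lk. S * p (Zp @ d))"
      by (rule sum.reindex_cong[where l = "\<lambda>d. Zp @ d"]) (auto simp: inj_on_def)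
    finally show ?thesis unfolding P_def by (simp add: sum_distrib_left)
  qed

  have Sb: "S \<le> 6 * 2^k"
    using G_bound[OF ke nn, of \<delta>] delta unfolding S_def H_def Lk_def by simp
  have Pnn: "0 \<le> P" unfolding P_def by (rule sum_nonneg) (simp add: p_def)
  have Pb: "P \<le> 2 / (real n * (real n - 1))"
    unfolding P_def Lk_def
  proof (rule P_bound[where n = n])
    show "n = length Zp + k" using nn unfolding Zp_def by simp
    show "3*k+6 \<le> n" by (rule nk)
    show "wt Zp = 2" unfolding Zp_def by (simp add: wt_repF)
    show "\<And>z. 0 \<le> p z" unfolding p_def by simp
    show "(\<Sum>z\<in>{z. length z = n}. p z) = 1"
      unfolding p_def using sum_pmf_eq_1[OF finLn Vsupp[of Z0]] unfolding Z0_def Ln_def by simp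
    fix z z' :: "bool list"
    assume lz: "length z = n" and lz': "length z' = n" and w: "wt z = wt z'"
    have "mset z = mset z'" using lz lz' w by (intro mset_bool_eq) simp_all
    then obtain \<sigma> where \<sigma>: "\<sigma> permutes {..<length z'}" "permute_list \<sigma> z' = z"
      by (rule mset_eq_permutation)
    have sp: "\<sigma> permutes {..<n}" using \<sigma>(1) lz' by simp
    have "pmf (V Z0) z' = pmf (V (permute_list \<sigma> Z0)) (permute_list \<sigma> z')"
      by (rule Vperm[OF sp]) (simp_all add: Z0_def lz')
    also have "permute_list \<sigma> Z0 = Z0" unfolding Z0_def by (rule permute_replicate[OF sp])
    finally show "p z = p z'" unfolding p_def using \<sigma>(2) by simp
  qed
  have n4: "real n \<ge> 6" using nk by simp
  have "measure_pmf.expectation (bind_pmf X (\<lambda>x. map_pmf (\<lambda>y. (x, y)) (V x))) F = (S / 2^k) * P"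
    using E1 sumg cardLk by simp
  also have "\<dots> \<le> 6 * P" using Sb Pnn by (intro mult_right_mono) (simp_all add: divide_le_eq)
  also have "\<dots> \<le> 6 * (2 / (real n * (real n - 1)))" using Pb by simp
  also have "\<dots> \<le> 16 / (real n)^2"
  proof -
    have pos: "real n * (real n - 1) > 0" using n4 by simp
    have "12 * (real n)^2 \<le> 16 * (real n * (real n - 1))" using n4 by (simp add: power2_eq_square algebra_simps)
    then show ?thesis using pos n4 by (simp add: divide_simps)
  qed
  finally show ?thesis unfolding F_def .
qed

end
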